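(* Let $g:\mathbb{R}^d\to\mathbb{R}$ be convex and let $\mathcal{X}=\{x:g(x)\le0\}$. Assume there is $R>0$ with $\mathcal{X}\subseteq R\mathbb{B}$. Suppose Slater's condition holds: there exist $\xi>0$ and $y\in\mathbb{R}^d$ with $g(y)\le-\xi$. Then for every $c\in(0,1)$, with $\epsilon=c\xi$ and $\sigma=(1-c)\frac{\xi}{2R}$: - the set $\{x\in\mathbb{R}^d:g(x)=-\epsilon\}$ is nonempty, and - $\|s\|\ge\sigma$ for every $x$ with $g(x)=-\epsilon$ and every $s\in\partial g(x)$.
   Context: $\|\cdot\|$ is the Euclidean norm, $\mathbb{B}=\{x\in\mathbb{R}^d:\|x\|\le1\}$, and $\partial g(x)$ is the subdifferential of $g$ at $x$. *)

theory Defs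
  imports "HOL-Analysis.Analysis"
begin

definition subdifferential :: "('a::euclidean_space \<Rightarrow> real) \<Rightarrow> 'a \<Rightarrow> 'a set" where
  "subdifferential g x = {s. \<forall>z. g z \<ge> g x + s \<bullet> (z - x)}"

end

theory Submission
  imports Defs
begin

theorem proposition1:
  fixes g :: "'a::euclidean_space \<Rightarrow> real" and R \<xi> :: real and y :: 'a
  assumes "convex_on UNIV g"
    and "R > 0"
    and "{x. g x \<le> 0} \<subseteq> cball 0 R"
    and "\<xi> > 0" and "g y \<le> - \<xi>"
  shows "\<forall>c. 0 < c \<and> c < 1 \<longrightarrow>
           (let \<epsilon> = c * \<xi>; \<sigma> = (1 - c) * (\<xi> / (2 * R)) in
              {x. g x = - \<epsilon>} \<noteq> {} \<and>
              (\<forall>x s. g x = - \<epsilon> \<and> s \<in> subdifferential g x \<longrightarrow> norm s \<ge> \<sigma>))"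
proof (intro allI impI)
  fix c :: real assume c: "0 < c \<and> c < 1"
  have cont: "continuous_on UNIV g"
    using convex_on_continuous[OF open_UNIV assms(1)] .
  have "g y \<le> 0" using assms(4,5) by linarith
  hence yR: "norm y \<le> R" using assms(3) by (auto simp: subset_iff)
  obtain b :: 'a where b: "b \<in> Basis" using nonempty_Basis by blast
  define z where "z = (R + 1) *\<^sub>R b"
  have "norm z = R + 1" using b assms(2) by (simp add: z_def)
  hence gz: "g z > 0"
  proof -
    assume n: "norm z = R + 1"
    show ?thesis
    proof (rule ccontr)
      assume "\<not> g z > 0"
      hence "g z \<le> 0" by linarith
      hence "z \<in> cball 0 R" using assms(3) by blast
      thus False using n by simp
    qed
  qed
  define f where "f t = g (y + t *\<^sub>R (z - y))" for t :: real
  have fc: "continuous_on {0..1} f" unfolding f_def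
    by (intro continuous_on_compose2[OF cont] continuous_intros) auto
  have "f 0 \<le> - (c * \<xi>)" using c assms(4,5)
    by (simp add: f_def) (smt (verit) mult_less_cancel_right2)
  moreover have "- (c * \<xi>) \<le> f 1" using gz c assms(4) by (simp add: f_def) (smt (verit) mult_pos_pos)
  ultimately obtain t where "f t = - (c * \<xi>)" using IVT'[OF _ _ _ fc] by force
  hence ne: "{x. g x = - (c * \<xi>)} \<noteq> {}" unfolding f_def by blast
  have bnd: "norm s \<ge> (1 - c) * (\<xi> / (2 * R))"
    if gx: "g x = - (c * \<xi>)" and s: "s \<in> subdifferential g x" for x s
  proof -
    have "g y \<ge> g x + s \<bullet> (y - x)" using s by (simp add: subdifferential_def)
    hence h1: "s \<bullet> (x - y) \<ge> (1 - c) * \<xi>" using gx assms(5)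
      by (simp add: inner_diff_right algebra_simps)
    have xR: "norm x \<le> R" using assms(3) gx c assms(4)
      by (auto simp: subset_iff)
    have "norm (x - y) \<le> 2 * R" using xR yR norm_triangle_ineq4[of x y] by linarith
    have "s \<bullet> (x - y) \<le> norm s * norm (x - y)" using Cauchy_Schwarz_ineq2 norm_cauchy_schwarz by blast
    also have "\<dots> \<le> norm s * (2 * R)" using \<open>norm (x - y) \<le> 2 * R\<close> by (simp add: mult_left_mono)
    finally have "(1 - c) * \<xi> \<le> norm s * (2 * R)" using h1 by linarith
    thus ?thesis using assms(2) by (simp add: field_simps)
  qed
  show "let \<epsilon> = c * \<xi>; \<sigma> = (1 - c) * (\<xi> / (2 * R)) in
              {x. g x = - \<epsilon>} \<noteq> {} \<and>
              (\<forall>x s. g x = - \<epsilon> \<and> s \<in> subdifferential g x \<longrightarrow> norm s \<ge> \<sigma>)"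
    using ne bnd unfolding Let_def by blast
qed

end
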